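(* Let $G$ be a graph of order $n$ with maximum degree $\Delta\ge 1$. Then $$\gamma_{rdR}(G)\ge \frac{2n+(\Delta-2)\gamma_r(G)}{\Delta}.$$ Moreover, the bound is sharp: for every integer $\Delta\ge 4$ there is a graph with maximum degree $\Delta$ attaining equality.
   Context: All graphs are finite and simple. An RDRD function of $G$ is a function $f:V(G)\to\{0,1,2,3\}$ such that every vertex with value $0$ has at least two neighbors with value $2$ or at least one neighbor with value $3$, every vertex with value $1$ has a neighbor with value $2$ or $3$, and the subgraph induced by the vertices with value $0$ has no isolated vertices; $\gamma_{rdR}(G)$ is the minimum of $\sum_v f(v)$ over RDRD functions. A restrained dominating set of $G$ is a set $S\subseteq V(G)$ such that every vertex of $V(G)\setminus S$ has a neighbor in $S$ and a neighbor in $V(G)\setminus S$; $\gamma_r(G)$ is the minimum cardinality of such a set. *)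

theory Defs
  imports Complex_Main
begin

definition sgraph :: "'a set \<Rightarrow> ('a \<Rightarrow> 'a \<Rightarrow> bool) \<Rightarrow> bool" where
  "sgraph V E \<longleftrightarrow> finite V \<and> (\<forall>u v. E u v \<longrightarrow> u \<in> V \<and> v \<in> V)
     \<and> (\<forall>u v. E u v \<longrightarrow> E v u) \<and> (\<forall>v. \<not> E v v)"

definition degree :: "'a set \<Rightarrow> ('a \<Rightarrow> 'a \<Rightarrow> bool) \<Rightarrow> 'a \<Rightarrow> nat" where
  "degree V E v = card {u \<in> V. E v u}"

definition maxdeg :: "'a set \<Rightarrow> ('a \<Rightarrow> 'a \<Rightarrow> bool) \<Rightarrow> nat" where
  "maxdeg V E = Max (insert 0 (degree V E ` V))"

definition is_RDRD :: "'a set \<Rightarrow> ('a \<Rightarrow> 'a \<Rightarrow> bool) \<Rightarrow> ('a \<Rightarrow> nat) \<Rightarrow> bool" where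
  "is_RDRD V E f \<longleftrightarrow> (\<forall>v\<in>V. f v \<le> 3
     \<and> (f v = 0 \<longrightarrow> (2 \<le> card {u \<in> V. E v u \<and> f u = 2} \<or> (\<exists>u\<in>V. E v u \<and> f u = 3)))
     \<and> (f v = 1 \<longrightarrow> (\<exists>u\<in>V. E v u \<and> (f u = 2 \<or> f u = 3)))
     \<and> (f v = 0 \<longrightarrow> (\<exists>u\<in>V. E v u \<and> f u = 0)))"

definition gamma_rdR :: "'a set \<Rightarrow> ('a \<Rightarrow> 'a \<Rightarrow> bool) \<Rightarrow> nat" where
  "gamma_rdR V E = Min {(\<Sum>v\<in>V. f v) | f. is_RDRD V E f}"

definition restrained_dom_set :: "'a set \<Rightarrow> ('a \<Rightarrow> 'a \<Rightarrow> bool) \<Rightarrow> 'a set \<Rightarrow> bool" where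
  "restrained_dom_set V E S \<longleftrightarrow> S \<subseteq> V \<and>
     (\<forall>v \<in> V - S. (\<exists>u\<in>S. E v u) \<and> (\<exists>u\<in>V - S. E v u))"

definition gamma_r :: "'a set \<Rightarrow> ('a \<Rightarrow> 'a \<Rightarrow> bool) \<Rightarrow> nat" where
  "gamma_r V E = Min {card S | S. restrained_dom_set V E S}"

end

theory Submission
  imports Defs
begin

lemma cardsum: "finite B \<Longrightarrow> card {u\<in>B. P u} = (\<Sum>u\<in>B. if P u then 1 else (0::nat))"
  by (simp add: sum.If_cases Int_def conj_commute)

lemma swapc: "finite A \<Longrightarrow> finite B \<Longrightarrow> (\<Sum>v\<in>A. card {u\<in>B. R v u}) = (\<Sum>u\<in>B. card {v\<in>A. R v u})"
  by (simp add: cardsum sum.swap[of _ A B])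

lemma deg_le: "sgraph V E \<Longrightarrow> u \<in> V \<Longrightarrow> card {v\<in>V. E u v} \<le> maxdeg V E"
  unfolding maxdeg_def degree_def sgraph_def
  by (rule Max_ge) auto

lemma RDRD_D:
  assumes "is_RDRD V E f" "v \<in> V"
  shows "f v \<le> 3"
    and "f v = 0 \<Longrightarrow> 2 \<le> card {u \<in> V. E v u \<and> f u = 2} \<or> (\<exists>u\<in>V. E v u \<and> f u = 3)"
    and "f v = 1 \<Longrightarrow> \<exists>u\<in>V. E v u \<and> (f u = 2 \<or> f u = 3)"
    and "f v = 0 \<Longrightarrow> \<exists>u\<in>V. E v u \<and> f u = 0"
proof -
  have h: "f v \<le> 3
     \<and> (f v = 0 \<longrightarrow> (2 \<le> card {u \<in> V. E v u \<and> f u = 2} \<or> (\<exists>u\<in>V. E v u \<and> f u = 3)))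
     \<and> (f v = 1 \<longrightarrow> (\<exists>u\<in>V. E v u \<and> (f u = 2 \<or> f u = 3)))
     \<and> (f v = 0 \<longrightarrow> (\<exists>u\<in>V. E v u \<and> f u = 0))"
    using bspec[OF assms(1)[unfolded is_RDRD_def] assms(2)] .
  show "f v \<le> 3" using h by (elim conjE)
  show "f v = 0 \<Longrightarrow> 2 \<le> card {u \<in> V. E v u \<and> f u = 2} \<or> (\<exists>u\<in>V. E v u \<and> f u = 3)"
    using h by (elim conjE) (erule mp)
  show "f v = 1 \<Longrightarrow> \<exists>u\<in>V. E v u \<and> (f u = 2 \<or> f u = 3)"
    using h by (elim conjE) (erule mp)
  show "f v = 0 \<Longrightarrow> \<exists>u\<in>V. E v u \<and> f u = 0"
    using h by (elim conjE) (erule mp)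
qed

lemma rdR_min:
  assumes "sgraph V E"
  shows "\<exists>f. is_RDRD V E f \<and> gamma_rdR V E = (\<Sum>v\<in>V. f v)"
    and "is_RDRD V E g \<Longrightarrow> gamma_rdR V E \<le> (\<Sum>v\<in>V. g v)"
proof -
  let ?R = "{(\<Sum>v\<in>V. f v) | f. is_RDRD V E f}"
  have fin: "finite ?R"
  proof (rule finite_subset[of _ "{..3 * card V}"])
    show "?R \<subseteq> {..3 * card V}"
    proof
      fix x assume "x \<in> ?R"
      then obtain f where f: "is_RDRD V E f" "x = (\<Sum>v\<in>V. f v)" by blast
      have "(\<Sum>v\<in>V. f v) \<le> (\<Sum>v\<in>V. 3)" using RDRD_D(1)[OF f(1)]
        by (intro sum_mono) auto
      then show "x \<in> {..3 * card V}" using f(2) by simp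
    qed
  qed simp
  have "is_RDRD V E (\<lambda>_. 3)" unfolding is_RDRD_def by simp
  then have ne: "?R \<noteq> {}" by blast
  from Min_in[OF fin ne] show "\<exists>f. is_RDRD V E f \<and> gamma_rdR V E = (\<Sum>v\<in>V. f v)"
    unfolding gamma_rdR_def by auto
  show "is_RDRD V E g \<Longrightarrow> gamma_rdR V E \<le> (\<Sum>v\<in>V. g v)"
    unfolding gamma_rdR_def by (rule Min_le[OF fin]) blast
qed

lemma r_min:
  assumes "sgraph V E"
  shows "\<exists>S. restrained_dom_set V E S \<and> gamma_r V E = card S"
    and "restrained_dom_set V E S \<Longrightarrow> gamma_r V E \<le> card S"
proof -
  let ?R = "{card S | S. restrained_dom_set V E S}"
  have fV: "finite V" using assms unfolding sgraph_def by blast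
  have fin: "finite ?R"
  proof (rule finite_subset[of _ "{..card V}"])
    show "?R \<subseteq> {..card V}"
      using fV unfolding restrained_dom_set_def by (auto intro: card_mono)
  qed simp
  have "restrained_dom_set V E V" unfolding restrained_dom_set_def by simp
  then have ne: "?R \<noteq> {}" by blast
  from Min_in[OF fin ne] show "\<exists>S. restrained_dom_set V E S \<and> gamma_r V E = card S"
    unfolding gamma_r_def by auto
  show "restrained_dom_set V E S \<Longrightarrow> gamma_r V E \<le> card S"
    unfolding gamma_r_def by (rule Min_le[OF fin]) blast
qed

lemma two_nb:
  assumes "sgraph V E" "a \<in> V" "b \<in> V" "a \<noteq> b" "E v a" "E v b" "v \<in> V"
  shows "2 \<le> maxdeg V E"
proof -
  have fV: "finite V" using assms unfolding sgraph_def by blast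
  have "card {a, b} \<le> card {u\<in>V. E v u}"
    by (rule card_mono) (use fV assms in auto)
  then show ?thesis using deg_le[OF assms(1) assms(7)] assms(4) by simp
qed

lemma lower:
  fixes V :: "'a set"
  assumes G: "sgraph V E" and D1: "maxdeg V E \<ge> 1"
  shows "real (gamma_rdR V E) \<ge>
    (2 * real (card V) + (real (maxdeg V E) - 2) * real (gamma_r V E)) / real (maxdeg V E)"
proof -
  define D where "D = maxdeg V E"
  have fV: "finite V" using G unfolding sgraph_def by blast
  have sym: "\<And>u v. E u v \<Longrightarrow> E v u" and inV: "\<And>u v. E u v \<Longrightarrow> u \<in> V \<and> v \<in> V"
    and irr: "\<And>v. \<not> E v v" using G unfolding sgraph_def by blast+
  obtain f where f: "is_RDRD V E f" and w: "gamma_rdR V E = (\<Sum>v\<in>V. f v)"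
    using rdR_min(1)[OF G] by blast
  define V0 where "V0 = {v\<in>V. f v = 0}"
  define V1 where "V1 = {v\<in>V. f v = 1}"
  define V2 where "V2 = {v\<in>V. f v = 2}"
  define V3 where "V3 = {v\<in>V. f v = 3}"
  have f3: "\<And>v. v \<in> V \<Longrightarrow> f v \<le> 3" using RDRD_D(1)[OF f] .
  have fin: "finite V0" "finite V1" "finite V2" "finite V3"
    using fV unfolding V0_def V1_def V2_def V3_def by auto
  have sumw: "(\<Sum>v\<in>V. f v) = card V1 + 2 * card V2 + 3 * card V3"
  proof -
    have "(\<Sum>v\<in>V. f v) = (\<Sum>v\<in>V. (if f v = 1 then 1 else 0) + 2 * (if f v = 2 then 1 else 0)
          + 3 * (if f v = 3 then 1 else (0::nat)))"
    proof (rule sum.cong)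
      fix v assume "v \<in> V"
      then have "f v \<le> 3" by (rule f3)
      then show "f v = (if f v = 1 then 1 else 0) + 2 * (if f v = 2 then 1 else 0)
          + 3 * (if f v = 3 then 1 else (0::nat))" by auto
    qed simp
    also have "\<dots> = card V1 + 2 * card V2 + 3 * card V3"
      unfolding V1_def V2_def V3_def
      by (simp add: cardsum[OF fV] sum.distrib sum_distrib_left)
    finally show ?thesis .
  qed
  have cardV: "card V = card V0 + card (V - V0)"
  proof -
    have "V0 \<subseteq> V" unfolding V0_def by auto
    then have "card (V - V0) = card V - card V0" "card V0 \<le> card V"
      using fin(1) fV by (auto simp: card_Diff_subset card_mono)
    then show ?thesis by simp
  qed
  have cardV': "card (V - V0) = card V1 + card V2 + card V3"
  proof -
    have "V - V0 = V1 \<union> V2 \<union> V3"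
    proof
      show "V - V0 \<subseteq> V1 \<union> V2 \<union> V3"
      proof
        fix x assume x: "x \<in> V - V0"
        then have "f x \<le> 3" "f x \<noteq> 0" using f3 unfolding V0_def by auto
        then have "f x = 1 \<or> f x = 2 \<or> f x = 3" by linarith
        then show "x \<in> V1 \<union> V2 \<union> V3" using x unfolding V1_def V2_def V3_def by auto
      qed
    qed (auto simp: V0_def V1_def V2_def V3_def)
    moreover have "card (V1 \<union> V2 \<union> V3) = card V1 + card V2 + card V3"
    proof -
      have "card (V1 \<union> V2 \<union> V3) = card (V1 \<union> V2) + card V3"
        using fin by (intro card_Un_disjoint) (auto simp: V1_def V2_def V3_def)
      moreover have "card (V1 \<union> V2) = card V1 + card V2"
        using fin by (intro card_Un_disjoint) (auto simp: V1_def V2_def)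
      ultimately show ?thesis by simp
    qed
    ultimately show ?thesis by simp
  qed
  have per: "\<And>v. v \<in> V0 \<Longrightarrow> 2 \<le> card {u\<in>V2. E v u} + 2 * card {u\<in>V3. E v u}"
  proof -
    fix v assume v: "v \<in> V0"
    then have "2 \<le> card {u \<in> V. E v u \<and> f u = 2} \<or> (\<exists>u\<in>V. E v u \<and> f u = 3)"
      using RDRD_D(2)[OF f] unfolding V0_def by blast
    then show "2 \<le> card {u\<in>V2. E v u} + 2 * card {u\<in>V3. E v u}"
    proof
      assume "2 \<le> card {u \<in> V. E v u \<and> f u = 2}"
      moreover have "{u \<in> V. E v u \<and> f u = 2} = {u\<in>V2. E v u}" unfolding V2_def by auto
      ultimately show ?thesis by simp
    next
      assume "\<exists>u\<in>V. E v u \<and> f u = 3"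
      then obtain u where "u \<in> {u\<in>V3. E v u}" unfolding V3_def by auto
      then have "card {u\<in>V3. E v u} \<noteq> 0" using fin(4) by auto
      then show ?thesis by simp
    qed
  qed
  have degb: "\<And>u. u \<in> V \<Longrightarrow> card {v\<in>V0. E v u} \<le> D"
  proof -
    fix u assume u: "u \<in> V"
    have "card {v\<in>V0. E v u} \<le> card {v\<in>V. E u v}"
      by (rule card_mono) (use fV sym in \<open>auto simp: V0_def\<close>)
    then show "card {v\<in>V0. E v u} \<le> D" using deg_le[OF G u] D_def by simp
  qed
  have key: "2 * card V0 \<le> D * card V2 + 2 * (D * card V3)"
  proof -
    have "2 * card V0 = (\<Sum>v\<in>V0. 2)" by simp
    also have "\<dots> \<le> (\<Sum>v\<in>V0. card {u\<in>V2. E v u} + 2 * card {u\<in>V3. E v u})"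
      by (rule sum_mono) (rule per)
    also have "\<dots> = (\<Sum>v\<in>V0. card {u\<in>V2. E v u}) + 2 * (\<Sum>v\<in>V0. card {u\<in>V3. E v u})"
      by (simp add: sum.distrib sum_distrib_left)
    also have "\<dots> = (\<Sum>u\<in>V2. card {v\<in>V0. E v u}) + 2 * (\<Sum>u\<in>V3. card {v\<in>V0. E v u})"
      using swapc[OF fin(1) fin(3), of E] swapc[OF fin(1) fin(4), of E] by simp
    also have "\<dots> \<le> (\<Sum>u\<in>V2. D) + 2 * (\<Sum>u\<in>V3. D)"
      using degb unfolding V2_def V3_def
      by (intro add_mono mult_le_mono2 sum_mono) auto
    also have "\<dots> = D * card V2 + 2 * (D * card V3)" by (simp add: mult.commute)
    finally show ?thesis .
  qed
  show ?thesis
  proof (cases "D \<ge> 2")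
    case True
    have rd: "restrained_dom_set V E (V - V0)"
      unfolding restrained_dom_set_def
    proof (intro conjI ballI)
      fix v assume "v \<in> V - (V - V0)"
      then have v: "v \<in> V" "f v = 0" unfolding V0_def by auto
      then have A: "2 \<le> card {u \<in> V. E v u \<and> f u = 2} \<or> (\<exists>u\<in>V. E v u \<and> f u = 3)"
        and B: "\<exists>u\<in>V. E v u \<and> f u = 0"
        using RDRD_D(2,4)[OF f] by blast+
      from B show "\<exists>u\<in>V - (V - V0). E v u" unfolding V0_def by auto
      from A show "\<exists>u\<in>V - V0. E v u"
      proof
        assume "2 \<le> card {u \<in> V. E v u \<and> f u = 2}"
        then have "{u \<in> V. E v u \<and> f u = 2} \<noteq> {}" by (metis card.empty not_numeral_le_zero)
        then show ?thesis unfolding V0_def by auto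
      qed (auto simp: V0_def)
    qed auto
    have gr: "gamma_r V E \<le> card (V - V0)" by (rule r_min(2)[OF G rd])
    have Dp: "real D > 0" using True by simp
    have "2 * real (card V) + (real D - 2) * real (gamma_r V E)
        \<le> 2 * real (card V) + (real D - 2) * real (card (V - V0))"
      using gr True by (intro add_left_mono mult_left_mono) auto
    also have "\<dots> \<le> real D * real (gamma_rdR V E)"
    proof -
      have k: "2 * real (card V0) \<le> real D * real (card V2) + 2 * (real D * real (card V3))"
        using key by (metis of_nat_add of_nat_le_iff of_nat_mult of_nat_numeral)
      have "real (gamma_rdR V E) = real (card V1) + 2 * real (card V2) + 3 * real (card V3)"
        using w sumw by simp
      then show ?thesis using k cardV cardV'
        by (simp add: algebra_simps)
    qed
    finally show ?thesis using Dp unfolding D_def by (simp add: divide_le_eq mult.commute)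
  next
    case False
    then have D1': "D = 1" using D1 D_def by simp
    have V0e: "V0 = {}"
    proof (rule ccontr)
      assume "V0 \<noteq> {}"
      then obtain v where v: "v \<in> V" "f v = 0" unfolding V0_def by auto
      then have A: "2 \<le> card {u \<in> V. E v u \<and> f u = 2} \<or> (\<exists>u\<in>V. E v u \<and> f u = 3)"
        and B: "\<exists>u\<in>V. E v u \<and> f u = 0"
        using RDRD_D(2,4)[OF f] by blast+
      obtain a where a: "a \<in> V" "E v a" "f a = 0" using B by blast
      from A show False
      proof
        assume "2 \<le> card {u \<in> V. E v u \<and> f u = 2}"
        then have "{u \<in> V. E v u \<and> f u = 2} \<noteq> {}" by (metis card.empty not_numeral_le_zero)
        then obtain b where "b \<in> V" "E v b" "f b = 2" by auto
        moreover have "a \<noteq> b" using a(3) \<open>f b = 2\<close> by auto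
        ultimately show False using two_nb[OF G a(1) \<open>b\<in>V\<close> \<open>a \<noteq> b\<close> a(2) \<open>E v b\<close> v(1)] D1' D_def by simp
      next
        assume "\<exists>u\<in>V. E v u \<and> f u = 3"
        then obtain b where "b \<in> V" "E v b" "f b = 3" by auto
        moreover have "a \<noteq> b" using a(3) \<open>f b = 3\<close> by auto
        ultimately show False using two_nb[OF G a(1) \<open>b\<in>V\<close> \<open>a \<noteq> b\<close> a(2) \<open>E v b\<close> v(1)] D1' D_def by simp
      qed
    qed
    obtain S where S: "restrained_dom_set V E S" "gamma_r V E = card S" using r_min(1)[OF G] by blast
    have "S = V"
    proof (rule ccontr)
      assume "S \<noteq> V"
      then obtain v where v: "v \<in> V - S" using S(1) unfolding restrained_dom_set_def by auto
      then obtain a b where "a \<in> S" "E v a" "b \<in> V - S" "E v b"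
        using S(1) unfolding restrained_dom_set_def by blast
      then show False using two_nb[OF G _ _ _ \<open>E v a\<close> \<open>E v b\<close>] v inV D1' D_def by auto
    qed
    then have gr: "gamma_r V E = card V" using S by simp
    have "card V = card V1 + card V2 + card V3" using cardV cardV' V0e by simp
    then have "card V \<le> gamma_rdR V E" using w sumw by simp
    then show ?thesis using gr D1' D_def by simp
  qed
qed



definition wE :: "nat \<Rightarrow> nat \<Rightarrow> nat \<Rightarrow> bool" where
  "wE D u v \<longleftrightarrow> (u = 0 \<and> v \<in> {1..D}) \<or> (v = 0 \<and> u \<in> {1..D}) \<or>
     (u \<in> {1..D} \<and> v \<in> {1..D} \<and> (v = u + 1 \<or> u = v + 1 \<or> (u = 1 \<and> v = D) \<or> (u = D \<and> v = 1)))"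

definition wsucc :: "nat \<Rightarrow> nat \<Rightarrow> nat" where "wsucc D i = (if i = D then 1 else i + 1)"

lemma wheel_sgraph: "D \<ge> 4 \<Longrightarrow> sgraph {0..D} (wE D)"
  unfolding sgraph_def wE_def by auto

lemma wheel_succ: "D \<ge> 4 \<Longrightarrow> i \<in> {1..D} \<Longrightarrow> wE D i (wsucc D i) \<and> wsucc D i \<in> {1..D}"
  unfolding wE_def wsucc_def by auto

lemma wheel_deg0: "degree {0..D} (wE D) 0 = D"
proof -
  have "{u \<in> {0..D}. wE D 0 u} = {1..D}" unfolding wE_def by auto
  then show ?thesis unfolding degree_def by simp
qed

lemma card3: "card {a, b, c :: 'a} \<le> 3"
  by (auto simp: card_insert_if)

lemma wheel_degi: "D \<ge> 4 \<Longrightarrow> i \<in> {1..D} \<Longrightarrow> degree {0..D} (wE D) i \<le> D"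
proof -
  assume D: "D \<ge> 4" and i: "i \<in> {1..D}"
  have "{u \<in> {0..D}. wE D i u} \<subseteq> {0, wsucc D i, if i = 1 then D else i - 1}"
    using i unfolding wE_def wsucc_def by auto
  then have "card {u \<in> {0..D}. wE D i u} \<le> card {0, wsucc D i, if i = 1 then D else i - 1}"
    by (intro card_mono) auto
  also have "\<dots> \<le> 3" by (rule card3)
  finally show ?thesis unfolding degree_def using D by simp
qed

lemma wheel_maxdeg: "D \<ge> 4 \<Longrightarrow> maxdeg {0..D} (wE D) = D"
  unfolding maxdeg_def
proof (rule Max_eqI)
  assume D: "D \<ge> 4"
  show "finite (insert 0 (degree {0..D} (wE D) ` {0..D}))" by simp
  show "D \<in> insert 0 (degree {0..D} (wE D) ` {0..D})" using wheel_deg0[of D] by force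
  fix y assume "y \<in> insert 0 (degree {0..D} (wE D) ` {0..D})"
  then show "y \<le> D"
  proof
    assume "y \<in> degree {0..D} (wE D) ` {0..D}"
    then obtain i where i: "i \<in> {0..D}" "y = degree {0..D} (wE D) i" by auto
    show "y \<le> D"
    proof (cases "i = 0")
      case True then show ?thesis using i wheel_deg0 by simp
    next
      case False then show ?thesis using i wheel_degi[OF D, of i] by simp
    qed
  qed simp
qed


lemma wheel_gr: assumes D: "D \<ge> 4" shows "gamma_r {0..D} (wE D) = 1"
proof -
  have G: "sgraph {0..D} (wE D)" using wheel_sgraph[OF D] .
  have rd: "restrained_dom_set {0..D} (wE D) {0}"
    unfolding restrained_dom_set_def
  proof (intro conjI ballI)
    fix v assume v: "v \<in> {0..D} - {0}"
    then have vi: "v \<in> {1..D}" by auto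
    show "\<exists>u\<in>{0}. wE D v u" using vi unfolding wE_def by auto
    show "\<exists>u\<in>{0..D} - {0}. wE D v u" using wheel_succ[OF D vi] by auto
  qed simp
  have le: "gamma_r {0..D} (wE D) \<le> 1" using r_min(2)[OF G rd] by simp
  obtain S where S: "restrained_dom_set {0..D} (wE D) S" "gamma_r {0..D} (wE D) = card S"
    using r_min(1)[OF G] by blast
  have "S \<noteq> {}"
  proof
    assume "S = {}"
    then show False using S(1) unfolding restrained_dom_set_def by auto
  qed
  moreover have "finite S" using S(1) unfolding restrained_dom_set_def by (auto intro: finite_subset)
  ultimately have "card S \<ge> 1" by (simp add: Suc_leI card_gt_0_iff)
  then show ?thesis using le S(2) by simp
qed

lemma wheel_rdR: assumes D: "D \<ge> 4" shows "gamma_rdR {0..D} (wE D) \<le> 3"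
proof -
  have G: "sgraph {0..D} (wE D)" using wheel_sgraph[OF D] .
  define f :: "nat \<Rightarrow> nat" where "f = (\<lambda>v. if v = 0 then 3 else 0)"
  have "is_RDRD {0..D} (wE D) f"
    unfolding is_RDRD_def
  proof (intro ballI conjI impI)
    fix v assume v: "v \<in> {0..D}"
    show "f v \<le> 3" unfolding f_def by simp
    {
      assume "f v = 0"
      then have vi: "v \<in> {1..D}" using v unfolding f_def by (auto split: if_splits)
      have "\<exists>u\<in>{0..D}. wE D v u \<and> f u = 3" 
        by (rule bexI[of _ 0]) (use vi in \<open>auto simp: wE_def f_def\<close>)
      then show "2 \<le> card {u \<in> {0..D}. wE D v u \<and> f u = 2} \<or> (\<exists>u\<in>{0..D}. wE D v u \<and> f u = 3)" ..
    }
    {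
      assume "f v = 0"
      then have vi: "v \<in> {1..D}" using v unfolding f_def by (auto split: if_splits)
      show "\<exists>u\<in>{0..D}. wE D v u \<and> f u = 0"
        by (rule bexI[of _ "wsucc D v"]) (use wheel_succ[OF D vi] in \<open>auto simp: f_def\<close>)
    }
    assume "f v = 1" then show "\<exists>u\<in>{0..D}. wE D v u \<and> (f u = 2 \<or> f u = 3)"
      unfolding f_def by (auto split: if_splits)
  qed
  then have "gamma_rdR {0..D} (wE D) \<le> (\<Sum>v\<in>{0..D}. f v)" by (rule rdR_min(2)[OF G])
  also have "(\<Sum>v\<in>{0..D}. f v) = 3"
  proof -
    have "(\<Sum>v\<in>{0..D}. f v) = (\<Sum>v\<in>{0..D}. if v = 0 then 3 else 0)" unfolding f_def by simp
    also have "\<dots> = 3" by (simp add: sum.If_cases)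
    finally show ?thesis .
  qed
  finally show ?thesis .
qed

theorem theorem2p4:
  shows "(\<forall>(V :: 'a set) E. sgraph V E \<and> maxdeg V E \<ge> 1 \<longrightarrow>
            real (gamma_rdR V E) \<ge>
              (2 * real (card V) + (real (maxdeg V E) - 2) * real (gamma_r V E)) / real (maxdeg V E))
      \<and> (\<forall>D :: nat. D \<ge> 4 \<longrightarrow> (\<exists>(V :: nat set) E. sgraph V E \<and> maxdeg V E = D \<and>
            real (gamma_rdR V E) =
              (2 * real (card V) + (real D - 2) * real (gamma_r V E)) / real D))"
proof (intro conjI allI impI)
  fix V :: "'a set" and E assume "sgraph V E \<and> maxdeg V E \<ge> 1"
  then show "real (gamma_rdR V E) \<ge>
              (2 * real (card V) + (real (maxdeg V E) - 2) * real (gamma_r V E)) / real (maxdeg V E)"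
    using lower by blast
next
  fix D :: nat assume D: "D \<ge> 4"
  have G: "sgraph {0..D} (wE D)" using wheel_sgraph[OF D] .
  have M: "maxdeg {0..D} (wE D) = D" using wheel_maxdeg[OF D] .
  have R: "gamma_r {0..D} (wE D) = 1" using wheel_gr[OF D] .
  have C: "card {0..D} = D + 1" by simp
  have Dp: "real D > 0" using D by simp
  have val: "(2 * real (card {0..D}) + (real D - 2) * real (gamma_r {0..D} (wE D))) / real D = 3"
    using Dp unfolding R C by (simp add: field_simps)
  have lo: "real (gamma_rdR {0..D} (wE D)) \<ge> 3"
    using lower[OF G] M val D by simp
  have hi: "real (gamma_rdR {0..D} (wE D)) \<le> 3" using wheel_rdR[OF D] by simp
  show "\<exists>(V :: nat set) E. sgraph V E \<and> maxdeg V E = D \<and>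
            real (gamma_rdR V E) =
              (2 * real (card V) + (real D - 2) * real (gamma_r V E)) / real D"
    by (rule exI[of _ "{0..D}"], rule exI[of _ "wE D"]) (use G M val lo hi in simp)
qed

end
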